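(* Let $f:[0,1]\to\mathbb{R}$ with $f(0),f(1)\in\mathbb{Z}$, and let $n\in\mathbb{N}_+$. Set, for $x\in[0,1]$, \[ \varphi_n(x):=(n+1)\int_0^1 t(1-t)^{n(1-x)}\frac{(1-t)^{nx-1}-t^{nx-1}}{1-2t}\,dt. \] (a) If $f(x)-\varphi_n(x)$ is monotone increasing on $[0,1]$, then $\widetilde{B}_n(f)$ and $\widehat{B}_n(f)$ are monotone increasing on $[0,1]$. (b) If $f(x)+\varphi_n(x)$ is monotone decreasing on $[0,1]$, then $\widetilde{B}_n(f)$ and $\widehat{B}_n(f)$ are monotone decreasing on $[0,1]$.
   Context: For $n\in\mathbb{N}_+$ and $f:[0,1]\to\mathbb{R}$, define $\widetilde{B}_n(f)(x):=\sum_{k=0}^n \left[f\left(\frac{k}{n}\right)\binom{n}{k}\right]x^k(1-x)^{n-k}$, where $[\alpha]$ is the largest integer $\le\alpha$, and $\widehat{B}_n(f)(x):=\sum_{k=0}^n \left\langle f\left(\frac{k}{n}\right)\binom{n}{k}\right\rangle x^k(1-x)^{n-k}$, where $\langle\alpha\rangle$ is the integer nearest to $\alpha$ (when $\alpha$ is a half-integer, $\langle\alpha\rangle$ may be either neighbouring integer, chosen arbitrarily; the result holds for any such choice). Monotone increasing/decreasing are meant in the non-strict sense. *)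

theory Defs
  imports "HOL-Analysis.Analysis"
begin

definition Btilde :: "nat \<Rightarrow> (real \<Rightarrow> real) \<Rightarrow> real \<Rightarrow> real" where
  "Btilde n f x = (\<Sum>k\<le>n. real_of_int \<lfloor>f (real k / real n) * real (n choose k)\<rfloor>
                         * x ^ k * (1 - x) ^ (n - k))"

definition nearest_rounding :: "nat \<Rightarrow> (real \<Rightarrow> real) \<Rightarrow> (nat \<Rightarrow> int) \<Rightarrow> bool" where
  "nearest_rounding n f r \<longleftrightarrow>
     (\<forall>k\<le>n. \<bar>f (real k / real n) * real (n choose k) - real_of_int (r k)\<bar> \<le> 1/2)"

definition Bhat :: "nat \<Rightarrow> (nat \<Rightarrow> int) \<Rightarrow> real \<Rightarrow> real" where
  "Bhat n r x = (\<Sum>k\<le>n. real_of_int (r k) * x ^ k * (1 - x) ^ (n - k))"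

definition phi :: "nat \<Rightarrow> real \<Rightarrow> real" where
  "phi n x = (real n + 1) * integral {0..1} (\<lambda>t.
      t * (1 - t) powr (real n * (1 - x)) *
      (((1 - t) powr (real n * x - 1) - t powr (real n * x - 1)) / (1 - 2 * t)))"

end

theory Submission imports Defs begin

lemma beta_int:
  assumes "j \<le> m"
  shows "((\<lambda>t::real. t^j * (1-t)^(m-j)) has_integral (fact j * fact (m-j) / fact (Suc m))) {0..1}"
proof -
  have "((\<lambda>t. t powr (real (Suc j) - 1) * (1 - t) powr (real (Suc (m-j)) - 1)) has_integral Beta (real (Suc j)) (real (Suc (m-j)))) {0..1}"
    by (rule has_integral_Beta_real) auto
  also have "Beta (real (Suc j)) (real (Suc (m-j))) = fact j * fact (m-j) / fact (Suc m)"
  proof -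
    have e: "real (Suc j) + real (Suc (m-j)) = 1 + real (Suc m)" using assms by simp
    show ?thesis unfolding Beta_def e
      using Gamma_fact[of j, where 'a=real] Gamma_fact[of "m-j", where 'a=real] Gamma_fact[of "Suc m", where 'a=real]
      by (simp add: add.commute)
  qed
  finally have I: "((\<lambda>t. t powr (real (Suc j) - 1) * (1 - t) powr (real (Suc (m-j)) - 1)) has_integral (fact j * fact (m-j) / fact (Suc m))) {0<..<1}"
    by (simp add: has_integral_Icc_iff_Ioo)
  have "((\<lambda>t::real. t^j * (1-t)^(m-j)) has_integral (fact j * fact (m-j) / fact (Suc m))) {0<..<1}"
    apply (rule has_integral_cong[THEN iffD1, OF _ I])
    by (simp add: powr_realpow)
  then show ?thesis by (simp add: has_integral_Icc_iff_Ioo)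
qed

lemma bern_deriv_nonneg:
  fixes c :: "nat \<Rightarrow> real"
  assumes "\<And>k. k < n \<Longrightarrow> c k * real (n-k) \<le> c (Suc k) * real (Suc k)"
    and z: "0 \<le> z" "z \<le> 1"
  shows "0 \<le> (\<Sum>k\<le>n. c k * (real k * z^(k-1) * (1-z)^(n-k) - real (n-k) * z^k * (1-z)^(n-k-1)))"
proof (cases n)
  case 0 then show ?thesis by simp
next
  case (Suc m)
  have A: "(\<Sum>k\<le>Suc m. c k * real k * z^(k-1) * (1-z)^(Suc m-k))
      = (\<Sum>k\<le>m. c (Suc k) * real (Suc k) * z^k * (1-z)^(m-k))"
    by (subst sum.atMost_Suc_shift) simp
  have B: "(\<Sum>k\<le>Suc m. c k * real (Suc m - k) * z^k * (1-z)^(Suc m-k-1))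
      = (\<Sum>k\<le>m. c k * real (Suc m - k) * z^k * (1-z)^(m-k))"
    by (subst sum.atMost_Suc) simp
  have "(\<Sum>k\<le>n. c k * (real k * z^(k-1) * (1-z)^(n-k) - real (n-k) * z^k * (1-z)^(n-k-1)))
     = (\<Sum>k\<le>Suc m. c k * real k * z^(k-1) * (1-z)^(Suc m-k)) - (\<Sum>k\<le>Suc m. c k * real (Suc m - k) * z^k * (1-z)^(Suc m-k-1))"
    unfolding Suc sum_subtractf[symmetric] by (rule sum.cong) (auto simp: algebra_simps)
  also have "\<dots> = (\<Sum>k\<le>m. (c (Suc k) * real (Suc k) - c k * real (Suc m - k)) * (z^k * (1-z)^(m-k)))"
    unfolding A B sum_subtractf[symmetric] by (rule sum.cong) (auto simp: algebra_simps)
  also have "\<dots> \<ge> 0"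
    apply (rule sum_nonneg, rule mult_nonneg_nonneg)
    using assms(1)[unfolded Suc] z by (auto simp: le_imp_less_Suc)
  finally show ?thesis by simp
qed

lemma bern_mono:
  fixes c :: "nat \<Rightarrow> real"
  assumes "\<And>k. k < n \<Longrightarrow> c k * real (n-k) \<le> c (Suc k) * real (Suc k)"
  shows "mono_on {0..1} (\<lambda>x. \<Sum>k\<le>n. c k * x^k * (1-x)^(n-k))"
proof (rule mono_onI)
  fix x y :: real assume xy: "x \<in> {0..1}" "y \<in> {0..1}" "x \<le> y"
  show "(\<Sum>k\<le>n. c k * x^k * (1-x)^(n-k)) \<le> (\<Sum>k\<le>n. c k * y^k * (1-y)^(n-k))"
  proof (rule DERIV_nonneg_imp_increasing_open[of x y "\<lambda>x. \<Sum>k\<le>n. c k * x^k * (1-x)^(n-k)"])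
    fix z assume z: "x < z" "z < y"
    have "((\<lambda>x. \<Sum>k\<le>n. c k * x^k * (1-x)^(n-k)) has_real_derivative
       (\<Sum>k\<le>n. c k * (real k * z^(k-1) * (1-z)^(n-k) - real (n-k) * z^k * (1-z)^(n-k-1)))) (at z)"
      by (rule derivative_eq_intros refl | simp)+ (simp add: algebra_simps)
    then show "\<exists>d. ((\<lambda>x. \<Sum>k\<le>n. c k * x^k * (1-x)^(n-k)) has_real_derivative d) (at z) \<and> 0 \<le> d"
      using bern_deriv_nonneg[OF assms, of z] xy z by auto
  next
    show "continuous_on {x..y} (\<lambda>x. \<Sum>k\<le>n. c k * x^k * (1-x)^(n-k))"
      by (intro continuous_intros)
  qed (use xy in auto)
qed


definition HH :: "nat \<Rightarrow> nat \<Rightarrow> real \<Rightarrow> real" where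
  "HH n k t = - (t^0 * (1-t)^(n-1-0)) + (\<Sum>j<k. t^j * (1-t)^(n-1-j))"

lemma HH_mult:
  assumes "k \<le> n" "n > 0"
  shows "HH n k t * ((1-t) - t) = t * (1-t)^(n-1) - t^k * (1-t)^(n-k)"
  using assms(1)
proof (induction k)
  case 0
  have "(1-t)^n = (1-t)^(n-1) * (1-t)" using assms(2)
    by (metis Suc_diff_1 power_Suc2)
  then show ?case by (simp add: HH_def algebra_simps)
next
  case (Suc k)
  have e: "n - k = Suc (n - Suc k)" using Suc by simp
  have "HH n (Suc k) t * ((1-t) - t) = HH n k t * ((1-t) - t) + t^k * (1-t)^(n-1-k) * ((1-t) - t)"
    by (simp add: HH_def algebra_simps)
  also have "\<dots> = t * (1-t)^(n-1) - t^Suc k * (1-t)^(n-Suc k)"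
    using Suc by (simp add: e algebra_simps)
  finally show ?case .
qed

lemma g_eq:
  assumes "k \<le> n" "n > 0" "0 < t" "t < 1" "t \<noteq> 1/2"
  shows "t * (1 - t) powr (real n * (1 - real k / real n)) *
      (((1 - t) powr (real n * (real k / real n) - 1) - t powr (real n * (real k / real n) - 1)) / (1 - 2 * t))
    = HH n k t"
proof -
  have nz: "(1-t) - t \<noteq> 0" using assms by auto
  have e1: "real n * (1 - real k / real n) = real (n-k)" using assms by (simp add: field_simps of_nat_diff)
  have e2: "real n * (real k / real n) - 1 = real k - 1" using assms by simp
  have u: "0 < 1 - t" using assms by simp
  have L: "t * (1-t)^(n-k) * ((1 - t) powr (real k - 1) - t powr (real k - 1)) = t * (1-t)^(n-1) - t^k * (1-t)^(n-k)"
  proof (cases k)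
    case 0
    have "(1-t)^n = (1-t)^(n-1) * (1-t)" using assms(2)
      by (metis Suc_diff_1 power_Suc2)
    have a: "t*(1-t)^n*(1/(1-t)) = t*(1-t)^(n-1)" using u by (simp add: \<open>(1-t)^n = _\<close>)
    have b: "t*(1-t)^n*(1/t) = (1-t)^n" using assms by simp
    show ?thesis using 0 u assms a b by (simp add: powr_neg_one right_diff_distrib)
  next
    case (Suc k')
    have "real k - 1 = real k'" using Suc by simp
    then have p: "(1 - t) powr (real k - 1) = (1-t)^k'" "t powr (real k - 1) = t^k'"
      using u assms by (simp_all add: powr_realpow)
    have "(1-t)^(n-k) * (1-t)^k' = (1-t)^(n-1)"
      using Suc assms by (simp flip: power_add)
    then show ?thesis unfolding p using Suc by (simp add: algebra_simps)
  qed
  have "HH n k t = (t * (1-t)^(n-1) - t^k * (1-t)^(n-k)) / ((1-t) - t)"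
    using HH_mult[OF assms(1,2), of t] nz by (simp add: field_simps)
  also have "\<dots> = t * (1 - t) powr (real n * (1 - real k / real n)) *
      (((1 - t) powr (real n * (real k / real n) - 1) - t powr (real n * (real k / real n) - 1)) / (1 - 2 * t))"
    unfolding e1 e2 L[symmetric] using u by (simp add: powr_realpow)
  finally show ?thesis by simp
qed

lemma HH_int:
  assumes "k \<le> n" "n > 0"
  shows "(HH n k has_integral (- (1 / real n) + (\<Sum>j<k. fact j * fact (n-1-j) / fact n))) {0..1}"
proof -
  have f: "fact (Suc (n-1)) = (fact n :: real)" using assms by simp
  have a: "((\<lambda>t::real. t^0 * (1-t)^(n-1-0)) has_integral (1/real n)) {0..1}"
    using beta_int[of 0 "n-1"] f assms by (simp add: fact_reduce[of n])
  have b: "((\<lambda>t::real. \<Sum>j<k. t^j * (1-t)^(n-1-j)) has_integral (\<Sum>j<k. fact j * fact (n-1-j) / fact n)) {0..1}"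
  proof -
    have "\<And>j. j \<in> {..<k} \<Longrightarrow> ((\<lambda>t::real. t^j * (1-t)^(n-1-j)) has_integral (fact j * fact (n-1-j) / fact n)) {0..1}"
    proof -
      fix j :: nat assume "j \<in> {..<k}"
      then have "j \<le> n - 1" using assms by auto
      then show "((\<lambda>t::real. t^j * (1-t)^(n-1-j)) has_integral (fact j * fact (n-1-j) / fact n)) {0..1}"
        using beta_int[of j "n-1"] f by simp
    qed
    then show ?thesis
      using has_integral_sum[OF finite_lessThan[of k], where f="\<lambda>j t. t^j * (1-t)^(n-1-j)" and i="\<lambda>j. fact j * fact (n-1-j) / fact n" and S="{0..1::real}"]
      by simp
  qed
  show ?thesis unfolding HH_def[abs_def]
    by (rule has_integral_add[OF has_integral_neg[OF a] b])
qed

lemma phi_val: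
  assumes "k \<le> n" "n > 0"
  shows "phi n (real k / real n) = (real n + 1) * (- (1 / real n) + (\<Sum>j<k. fact j * fact (n-1-j) / fact n))"
proof -
  have "((\<lambda>t. t * (1 - t) powr (real n * (1 - real k / real n)) *
      (((1 - t) powr (real n * (real k / real n) - 1) - t powr (real n * (real k / real n) - 1)) / (1 - 2 * t)))
      has_integral (- (1 / real n) + (\<Sum>j<k. fact j * fact (n-1-j) / fact n))) {0..1}"
    apply (rule has_integral_spike_finite[of "{0, 1/2, 1}", OF _ _ HH_int[OF assms]])
    using g_eq[OF assms] by auto
  then show ?thesis unfolding phi_def by (simp add: integral_unique)
qed

lemma phi_diff:
  assumes "k < n"
  shows "(phi n (real (Suc k) / real n) - phi n (real k / real n)) * real (n choose Suc k) * real (Suc k) = real n + 1"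
proof -
  have n: "n > 0" using assms by simp
  have "phi n (real (Suc k) / real n) - phi n (real k / real n) = (real n + 1) * (fact k * fact (n-1-k) / fact n)"
    using phi_val[of "Suc k" n] phi_val[of k n] assms by (simp add: algebra_simps)
  moreover have "fact (Suc k) * fact (n - Suc k) * real (n choose Suc k) = fact n"
    using binomial_fact_lemma[of "Suc k" n] assms by (metis Suc_leI of_nat_fact of_nat_mult)
  moreover have "n - 1 - k = n - Suc k" by simp
  ultimately show ?thesis
  proof -
    assume d: "phi n (real (Suc k) / real n) - phi n (real k / real n) = (real n + 1) * (fact k * fact (n-1-k) / fact n)"
      and f: "fact (Suc k) * fact (n - Suc k) * real (n choose Suc k) = fact n" and e: "n - 1 - k = n - Suc k"
    have f2: "fact k * fact (n - Suc k) * real (n choose Suc k) * real (Suc k) = fact n"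
      using f by (simp add: algebra_simps)
    have "(phi n (real (Suc k) / real n) - phi n (real k / real n)) * real (n choose Suc k) * real (Suc k)
       = (real n + 1) * (fact k * fact (n - Suc k) * real (n choose Suc k) * real (Suc k)) / fact n"
      unfolding d e by simp
    also have "\<dots> = real n + 1" unfolding f2 by simp
    finally show ?thesis .
  qed
qed


lemma bern_antimono:
  fixes c :: "nat \<Rightarrow> real"
  assumes "\<And>k. k < n \<Longrightarrow> c (Suc k) * real (Suc k) \<le> c k * real (n-k)"
  shows "antimono_on {0..1} (\<lambda>x. \<Sum>k\<le>n. c k * x^k * (1-x)^(n-k))"
proof -
  have "mono_on {0..1} (\<lambda>x. \<Sum>k\<le>n. (- c k) * x^k * (1-x)^(n-k))"
    by (rule bern_mono) (use assms in auto)
  then show ?thesis unfolding monotone_on_def by (simp add: sum_negf)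
qed

lemma key_inc:
  fixes f0 f1 D C0 C1 a b c0 c1 e e' :: real
  assumes "C0*a = C1*b" "D*C1*b = a+b" "f0 + D \<le> f1" "0 \<le> b" "0 \<le> a" "0 \<le> C1"
    "c0 \<le> f0*C0 + e" "f1*C1 - e' \<le> c1" "e*a + e'*b \<le> a+b"
  shows "c0*a \<le> c1*b"
proof -
  have 1: "c0*a \<le> (f0*C0 + e)*a" using assms by (intro mult_right_mono) auto
  have 2: "(f1*C1 - e')*b \<le> c1*b" using assms by (intro mult_right_mono) auto
  have 3: "(f0 + D)*(C1*b) \<le> f1*(C1*b)" using assms by (intro mult_right_mono) auto
  have 4: "(f0 + D)*(C1*b) = f0*(C0*a) + (a+b)" using assms(1,2) by (simp add: algebra_simps)
  show ?thesis using 1 2 3 4 assms(9) by (simp add: algebra_simps)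
qed

lemma key_dec:
  fixes f0 f1 D C0 C1 a b c0 c1 e e' :: real
  assumes "C0*a = C1*b" "D*C1*b = a+b" "f1 + D \<le> f0" "0 \<le> b" "0 \<le> a" "0 \<le> C1"
    "f0*C0 - e \<le> c0" "c1 \<le> f1*C1 + e'" "e*a + e'*b \<le> a+b"
  shows "c1*b \<le> c0*a"
proof -
  have 1: "(f0*C0 - e)*a \<le> c0*a" using assms by (intro mult_right_mono) auto
  have 2: "c1*b \<le> (f1*C1 + e')*b" using assms by (intro mult_right_mono) auto
  have 3: "f1*(C1*b) \<le> (f0 - D)*(C1*b)" using assms by (intro mult_right_mono) auto
  have 4: "(f0 - D)*(C1*b) = f0*(C0*a) - (a+b)" using assms(1,2) by (simp add: algebra_simps)
  show ?thesis using 1 2 3 4 assms(9) by (simp add: algebra_simps)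
qed

lemma binom_rel:
  assumes "k < n"
  shows "real (n choose k) * real (n - k) = real (n choose Suc k) * real (Suc k)"
proof -
  obtain m where m: "n = Suc m" using assms by (cases n) auto
  have "(n - k) * (n choose k) = n * ((n-1) choose k)" by (rule binomial_absorb_comp)
  also have "\<dots> = Suc k * (n choose Suc k)" unfolding m using Suc_times_binomial[of k m] by simp
  finally show ?thesis by (metis of_nat_mult mult.commute)
qed

theorem theorem1p8:
  fixes f :: "real \<Rightarrow> real" and n :: nat
  assumes "f 0 \<in> \<int>" and "f 1 \<in> \<int>" and "n > 0"
  shows "(mono_on {0..1} (\<lambda>x. f x - phi n x) \<longrightarrow>
            mono_on {0..1} (Btilde n f) \<and>
            (\<forall>r. nearest_rounding n f r \<longrightarrow> mono_on {0..1} (Bhat n r)))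
       \<and> (antimono_on {0..1} (\<lambda>x. f x + phi n x) \<longrightarrow>
            antimono_on {0..1} (Btilde n f) \<and>
            (\<forall>r. nearest_rounding n f r \<longrightarrow> antimono_on {0..1} (Bhat n r)))"
proof -
  define x where "x k = real k / real n" for k
  define C where "C k = real (n choose k)" for k
  define D where "D k = phi n (x (Suc k)) - phi n (x k)" for k
  have xin: "x k \<in> {0..1}" if "k \<le> n" for k
    using that assms(3) by (auto simp: x_def divide_le_eq_1)
  have rel1: "C k * real (n-k) = C (Suc k) * real (Suc k)" if "k < n" for k
    unfolding C_def using binom_rel[OF that] .
  have rel2: "D k * C (Suc k) * real (Suc k) = real (n-k) + real (Suc k)" if "k < n" for k
    unfolding D_def C_def x_def using phi_diff[OF that] that by simp
  have Bt: "Btilde n f = (\<lambda>y. \<Sum>k\<le>n. real_of_int \<lfloor>f (x k) * C k\<rfloor> * y^k * (1-y)^(n-k))"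
    unfolding Btilde_def[abs_def] x_def C_def by simp
  have Bh: "Bhat n r = (\<lambda>y. \<Sum>k\<le>n. real_of_int (r k) * y^k * (1-y)^(n-k))" for r
    unfolding Bhat_def[abs_def] by simp
  have nr: "\<bar>f (x k) * C k - real_of_int (r k)\<bar> \<le> 1/2" if "nearest_rounding n f r" "k \<le> n" for r k
    using that unfolding nearest_rounding_def x_def C_def by simp
  have Cnn: "0 \<le> C k" for k unfolding C_def by simp
  show ?thesis
  proof (intro conjI impI allI)
    assume M: "mono_on {0..1} (\<lambda>x. f x - phi n x)"
    have fD: "f (x k) + D k \<le> f (x (Suc k))" if "k < n" for k
    proof -
      have "f (x k) - phi n (x k) \<le> f (x (Suc k)) - phi n (x (Suc k))"
      proof (rule monotone_onD[OF M xin[of k] xin[of "Suc k"]])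
        show "x k \<le> x (Suc k)" unfolding x_def by (simp add: divide_right_mono)
      qed (use that in auto)
      then show ?thesis unfolding D_def by simp
    qed
    show "mono_on {0..1} (Btilde n f)" unfolding Bt
    proof (rule bern_mono)
      fix k assume k: "k < n"
      show "real_of_int \<lfloor>f (x k) * C k\<rfloor> * real (n-k) \<le> real_of_int \<lfloor>f (x (Suc k)) * C (Suc k)\<rfloor> * real (Suc k)"
        by (rule key_inc[OF rel1[OF k] rel2[OF k] fD[OF k], where e=0 and e'=1])
          (use Cnn in \<open>auto simp: of_int_floor_le\<close>)
    qed
    fix r assume R: "nearest_rounding n f r"
    show "mono_on {0..1} (Bhat n r)" unfolding Bh
    proof (rule bern_mono)
      fix k assume k: "k < n"
      show "real_of_int (r k) * real (n-k) \<le> real_of_int (r (Suc k)) * real (Suc k)"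
        by (rule key_inc[OF rel1[OF k] rel2[OF k] fD[OF k], where e="1/2" and e'="1/2"])
          (use Cnn abs_le_D1[OF nr[OF R, of k]] abs_le_D2[OF nr[OF R, of k]]
            abs_le_D1[OF nr[OF R, of "Suc k"]] abs_le_D2[OF nr[OF R, of "Suc k"]] k less_imp_le[OF k, THEN of_nat_mono, where 'a=real] in \<open>auto simp: of_nat_diff field_simps\<close>)
    qed
  next
    assume M: "antimono_on {0..1} (\<lambda>x. f x + phi n x)"
    have fD: "f (x (Suc k)) + D k \<le> f (x k)" if "k < n" for k
    proof -
      have "f (x (Suc k)) + phi n (x (Suc k)) \<le> f (x k) + phi n (x k)"
      proof (rule monotone_onD[OF M xin[of k] xin[of "Suc k"]])
        show "x k \<le> x (Suc k)" unfolding x_def by (simp add: divide_right_mono)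
      qed (use that in auto)
      then show ?thesis unfolding D_def by simp
    qed
    show "antimono_on {0..1} (Btilde n f)" unfolding Bt
    proof (rule bern_antimono)
      fix k assume k: "k < n"
      show "real_of_int \<lfloor>f (x (Suc k)) * C (Suc k)\<rfloor> * real (Suc k) \<le> real_of_int \<lfloor>f (x k) * C k\<rfloor> * real (n-k)"
        by (rule key_dec[OF rel1[OF k] rel2[OF k] fD[OF k], where e=1 and e'=0])
          (use Cnn in \<open>auto simp: of_int_floor_le\<close>)
    qed
    fix r assume R: "nearest_rounding n f r"
    show "antimono_on {0..1} (Bhat n r)" unfolding Bh
    proof (rule bern_antimono)
      fix k assume k: "k < n"
      show "real_of_int (r (Suc k)) * real (Suc k) \<le> real_of_int (r k) * real (n-k)"
        by (rule key_dec[OF rel1[OF k] rel2[OF k] fD[OF k], where e="1/2" and e'="1/2"])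
          (use Cnn abs_le_D1[OF nr[OF R, of k]] abs_le_D2[OF nr[OF R, of k]]
            abs_le_D1[OF nr[OF R, of "Suc k"]] abs_le_D2[OF nr[OF R, of "Suc k"]] k less_imp_le[OF k, THEN of_nat_mono, where 'a=real] in \<open>auto simp: of_nat_diff field_simps\<close>)
    qed
  qed
qed

end
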